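(* Let $k\geq 1$ be an integer. The Laplacian spectrum of the spider $T(k,k)$ is $$\{0^{[1]},\ \theta^{[k-1]},\ \lambda_1^{[1]},\ \overline{\theta}^{[k-1]},\ \lambda_2^{[1]}\},$$ where $\theta=\frac{3-\sqrt{5}}{2}$, $\overline{\theta}=\frac{3+\sqrt{5}}{2}$, and $\lambda_1,\lambda_2$ are the roots of $x^2-(k+3)x+2k+1$.
   Context: For a graph $G$, the Laplacian matrix is $L(G)=D(G)-A(G)$, with $D(G)$ the diagonal degree matrix and $A(G)$ the adjacency matrix; its Laplacian spectrum is the multiset of eigenvalues of $L(G)$, and $a^{[m]}$ denotes the eigenvalue $a$ with multiplicity $m$. For integers $1\leq k\leq s$, the spider $T(s,k)$ is the tree obtained from the star $K_{1,s}$ by extending $k$ of its $s$ rays by one extra edge each; it has $s+k+1$ vertices. *)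

theory Defs
  imports "Jordan_Normal_Form.Char_Poly" "HOL-Computational_Algebra.Polynomial"
begin

text \<open>Simple graphs on vertex set {0..<n} given by a symmetric irreflexive relation.\<close>

definition degree_in :: "nat \<Rightarrow> (nat \<Rightarrow> nat \<Rightarrow> bool) \<Rightarrow> nat \<Rightarrow> nat" where
  "degree_in n adj i = card {j. j < n \<and> adj i j}"

definition laplacian :: "nat \<Rightarrow> (nat \<Rightarrow> nat \<Rightarrow> bool) \<Rightarrow> real mat" where
  "laplacian n adj = mat n n (\<lambda>(i,j).
      (if i = j then real (degree_in n adj i) else 0) - (if adj i j then 1 else 0))"

definition laplacian_spectrum :: "nat \<Rightarrow> (nat \<Rightarrow> nat \<Rightarrow> bool) \<Rightarrow> real multiset" where
  "laplacian_spectrum n adj = proots (char_poly (laplacian n adj))"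

text \<open>Spider T(s,k): centre 0, ray vertices 1..s adjacent to 0, and for
  i = 1..k the extra vertex s+i adjacent to i. It has s+k+1 vertices.\<close>
definition spider_edge :: "nat \<Rightarrow> nat \<Rightarrow> nat \<Rightarrow> nat \<Rightarrow> bool" where
  "spider_edge s k i j \<longleftrightarrow>
     (i = 0 \<and> 1 \<le> j \<and> j \<le> s) \<or> (1 \<le> i \<and> i \<le> k \<and> j = s + i)"

definition spider_adj :: "nat \<Rightarrow> nat \<Rightarrow> nat \<Rightarrow> nat \<Rightarrow> bool" where
  "spider_adj s k i j \<longleftrightarrow> spider_edge s k i j \<or> spider_edge s k j i"

definition spider_vertices :: "nat \<Rightarrow> nat \<Rightarrow> nat" where
  "spider_vertices s k = s + k + 1"

end

theory Submission
  imports Defs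
begin

lemma adj_iff: "spider_adj k k i j \<longleftrightarrow>
   (i = 0 \<and> 1 \<le> j \<and> j \<le> k) \<or> (j = 0 \<and> 1 \<le> i \<and> i \<le> k) \<or>
   (1 \<le> i \<and> i \<le> k \<and> j = k + i) \<or> (1 \<le> j \<and> j \<le> k \<and> i = k + j)"
  unfolding spider_adj_def spider_edge_def by auto

lemma deg_center: "degree_in (k+k+1) (spider_adj k k) 0 = k"
proof -
  have "{j. j < k+k+1 \<and> spider_adj k k 0 j} = {1..k}" by (auto simp: adj_iff)
  thus ?thesis unfolding degree_in_def by simp
qed

lemma deg_ray: "1 \<le> i \<Longrightarrow> i \<le> k \<Longrightarrow> degree_in (k+k+1) (spider_adj k k) i = 2"
proof -
  assume "1 \<le> i" "i \<le> k"
  hence "{j. j < k+k+1 \<and> spider_adj k k i j} = {0, k+i}" by (auto simp: adj_iff)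
  thus ?thesis unfolding degree_in_def using \<open>1 \<le> i\<close> by simp
qed

lemma deg_leaf: "k < i \<Longrightarrow> i < k+k+1 \<Longrightarrow> degree_in (k+k+1) (spider_adj k k) i = 1"
proof -
  assume "k < i" "i < k+k+1"
  hence "{j. j < k+k+1 \<and> spider_adj k k i j} = {i-k}" by (auto simp: adj_iff)
  thus ?thesis unfolding degree_in_def by simp
qed

definition Mx :: "nat \<Rightarrow> real \<Rightarrow> real mat" where
  "Mx k x = mat (k+k+1) (k+k+1) (\<lambda>(i,j). (if i=j then x - real (degree_in (k+k+1) (spider_adj k k) i) else 0)
     + (if spider_adj k k i j then 1 else 0))"

lemma poly_char: "poly (char_poly (laplacian (spider_vertices k k) (spider_adj k k))) x = det (Mx k x)"
  unfolding char_poly_def spider_vertices_def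
  by (rule poly_det_cong[of _ "k+k+1"], auto simp: Mx_def char_poly_matrix_def laplacian_def)


definition Um :: "nat \<Rightarrow> real \<Rightarrow> real \<Rightarrow> real mat" where
  "Um k a d = mat (k+k+1) (k+k+1) (\<lambda>(i,l). (if l=i then 1 else 0) + (if i=0 \<and> 1\<le>l \<and> l\<le>k then 1/d else 0)
      + (if 1\<le>i \<and> i\<le>k \<and> l=k+i then 1/a else 0))"

definition Nm :: "nat \<Rightarrow> real \<Rightarrow> real \<Rightarrow> real \<Rightarrow> real mat" where
  "Nm k a d e = mat (k+k+1) (k+k+1) (\<lambda>(l,j). if l=0 then (if j=0 then e else 0)
      else if l \<le> k then (if j=0 then 1 else if j=l then d else 0)
      else (if j = l-k then 1 else if j=l then a else 0))"

lemma dimU[simp]: "dim_row (Um k a d) = k+k+1" "dim_col (Um k a d) = k+k+1"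
  by (auto simp: Um_def)
lemma dimN[simp]: "dim_row (Nm k a d e) = k+k+1" "dim_col (Nm k a d e) = k+k+1"
  by (auto simp: Nm_def)

lemma sumU: assumes "i < k+k+1"
  shows "(\<Sum>l\<in>{0..<k+k+1}. Um k a d $$ (i,l) * g l) = g i + (if i=0 then (1/d) * (\<Sum>l\<in>{1..k}. g l) else 0)
     + (if 1\<le>i \<and> i\<le>k then g (k+i) / a else 0)"
proof -
  have "(\<Sum>l\<in>{0..<k+k+1}. Um k a d $$ (i,l) * g l) =
     (\<Sum>l\<in>{0..<k+k+1}. (if l=i then g l else 0)) + (\<Sum>l\<in>{0..<k+k+1}. (if i=0 \<and> 1\<le>l \<and> l\<le>k then g l/d else 0))
      + (\<Sum>l\<in>{0..<k+k+1}. (if 1\<le>i \<and> i\<le>k \<and> l=k+i then g l/a else 0))"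
    unfolding sum.distrib[symmetric]
    apply (rule sum.cong[OF refl])
    using assms by (auto simp: Um_def)
  also have "(\<Sum>l\<in>{0..<k+k+1}. (if l=i then g l else 0)) = g i" using assms by (simp add: sum.delta')
  also have "(\<Sum>l\<in>{0..<k+k+1}. (if i=0 \<and> 1\<le>l \<and> l\<le>k then g l/d else 0)) = (if i=0 then (1/d) * (\<Sum>l\<in>{1..k}. g l) else 0)"
  proof (cases "i=0")
    case True
    have "(\<Sum>l\<in>{0..<k+k+1}. (if 1\<le>l \<and> l\<le>k then g l/d else 0)) = (\<Sum>l\<in>{1..k}. g l/d)"
      by (rule sum.mono_neutral_cong_right) auto
    thus ?thesis using True by (simp add: sum_divide_distrib)
  qed simp
  also have "(\<Sum>l\<in>{0..<k+k+1}. (if 1\<le>i \<and> i\<le>k \<and> l=k+i then g l/a else 0)) = (if 1\<le>i \<and> i\<le>k then g (k+i) / a else 0)"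
  proof (cases "1\<le>i \<and> i\<le>k")
    case True
    thus ?thesis by simp
  next
    case False
    have "(\<Sum>l\<in>{0..<k+k+1}. (if 1\<le>i \<and> i\<le>k \<and> l=k+i then g l/a else 0)) = 0"
      by (rule sum.neutral) (use False in auto)
    thus ?thesis by (simp only: if_not_P[OF False])
  qed
  finally show ?thesis .
qed

lemma sumN: assumes j: "j < k+k+1" shows "(\<Sum>l\<in>{1..k}. Nm k a d e $$ (l,j)) = (if j = 0 then real k else if 1\<le>j\<and>j\<le>k then d else 0)"
proof -
  have "(\<Sum>l\<in>{1..k}. Nm k a d e $$ (l,j)) = (\<Sum>l\<in>{1..k}. if j=0 then 1 else if j=l then d else 0)"
    by (intro sum.cong refl) (use j in \<open>auto simp: Nm_def\<close>)
  also have "\<dots> = (if j = 0 then real k else if 1\<le>j\<and>j\<le>k then d else 0)"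
    by (cases "j=0", auto simp: sum.delta)
  finally show ?thesis .
qed

lemma factor: assumes a: "a = x - 1" "a \<noteq> 0" and d: "d = x - 2 - 1/a" "d \<noteq> 0" and e: "e = x - real k - real k / d"
  shows "Mx k x = Um k a d * Nm k a d e"
proof (rule eq_matI)
  fix i j assume i: "i < dim_row (Um k a d * Nm k a d e)" and j: "j < dim_col (Um k a d * Nm k a d e)"
  hence i': "i < k+k+1" and j': "j < k+k+1" by auto
  have "(Um k a d * Nm k a d e) $$ (i,j) = (\<Sum>l\<in>{0..<k+k+1}. Um k a d $$ (i,l) * Nm k a d e $$ (l,j))"
    using i' j' by (simp add: index_mult_mat scalar_prod_def dimU dimN)
  also have "\<dots> = Nm k a d e $$ (i,j) + (if i=0 then (1/d) * (if j = 0 then real k else if 1\<le>j\<and>j\<le>k then d else 0) else 0)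
     + (if 1\<le>i \<and> i\<le>k then Nm k a d e $$ (k+i,j) / a else 0)"
    by (simp only: sumU[OF i'] sumN[OF j'])
  also have "\<dots> = Mx k x $$ (i,j)"
  proof -
    have Mij: "Mx k x $$ (i,j) = (if i=j then x - real (degree_in (k+k+1) (spider_adj k k) i) else 0)
     + (if spider_adj k k i j then 1 else 0)" using i' j' by (simp add: Mx_def)
    have Nij: "Nm k a d e $$ (i,j) = (if i=0 then (if j=0 then e else 0)
      else if i \<le> k then (if j=0 then 1 else if j=i then d else 0)
      else (if j = i-k then 1 else if j=i then a else 0))" using i' j' by (simp add: Nm_def)
    consider "i = 0" | "1 \<le> i \<and> i \<le> k" | "k < i" by linarith
    thus ?thesis
    proof cases
      case 1
      consider "j = 0" | "1 \<le> j \<and> j \<le> k" | "k < j" by linarith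
      thus ?thesis
      proof cases
        case 1
        thus ?thesis unfolding Nij Mij using \<open>i=0\<close> d e by (simp add: adj_iff deg_center[simplified])
      next
        case 2
        thus ?thesis unfolding Nij Mij using \<open>i=0\<close> d by (simp add: adj_iff)
      next
        case 3
        thus ?thesis unfolding Nij Mij using \<open>i=0\<close> by (simp add: adj_iff)
      qed
    next
      case 2
      have Nki: "Nm k a d e $$ (k+i,j) = (if j = i then 1 else if j=k+i then a else 0)"
        using 2 j' by (simp add: Nm_def)
      consider "j = 0" | "j = i" | "j = k+i" | "j \<noteq> 0 \<and> j \<noteq> i \<and> j \<noteq> k+i" by blast
      thus ?thesis
      proof cases
        case 1
        thus ?thesis unfolding Nij Mij Nki using 2 by (simp add: adj_iff)
      next
        case 3
        thus ?thesis unfolding Nij Mij Nki using 2 a by (simp add: adj_iff)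
      next
        case 4
        thus ?thesis using 2 by (auto simp add: Nij Mij Nki adj_iff)
      next
        case j: 2
        have "d + 1/a = x - 2" using d by simp
        thus ?thesis unfolding Nij Mij Nki using 2 j by (simp add: adj_iff deg_ray[simplified])
      qed
    next
      case 3
      consider "j = i - k" | "j = i" | "j \<noteq> i-k \<and> j \<noteq> i" by blast
      thus ?thesis
      proof cases
        case 1
        thus ?thesis unfolding Nij Mij using 3 i' by (auto simp add: adj_iff)
      next
        case 2
        thus ?thesis unfolding Nij Mij using 3 i' a by (simp add: adj_iff deg_leaf[simplified])
      next
        case j: 3
        thus ?thesis using 3 i' j' by (auto simp add: Nij Mij adj_iff)
      qed
    qed
  qed
  finally show "Mx k x $$ (i,j) = (Um k a d * Nm k a d e) $$ (i,j)" ..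
qed (auto simp: Mx_def Um_def Nm_def)


lemma prod_list_upt: "prod_list (map f [0..<n]) = (\<Prod>i\<in>{0..<n}. (f i :: real))"
  by (induct n) auto

lemma diag_nth: "i < dim_row A \<Longrightarrow> diag_mat A ! i = A $$ (i,i)"
  by (simp add: diag_mat_def)
lemma diag_len[simp]: "length (diag_mat A) = dim_row A"
  by (simp add: diag_mat_def)

lemma detU: "det (Um k a d) = 1"
proof -
  have ut: "upper_triangular (Um k a d)" unfolding upper_triangular_def by (auto simp: Um_def)
  have "det (Um k a d) = prod_list (diag_mat (Um k a d))"
  proof -
    have c: "Um k a d \<in> carrier_mat (k+k+1) (k+k+1)" unfolding carrier_mat_def by simp
    show ?thesis by (rule det_upper_triangular[OF ut c])
  qed
  also have "diag_mat (Um k a d) = replicate (k+k+1) 1"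
    by (rule nth_equalityI) (auto simp: diag_nth Um_def nth_Cons')
  finally show ?thesis by simp
qed

lemma detN: "det (Nm k a d e) = e * d^k * a^k"
proof -
  have "det (Nm k a d e) = prod_list (diag_mat (Nm k a d e))"
  proof -
    have c: "Nm k a d e \<in> carrier_mat (k+k+1) (k+k+1)" unfolding carrier_mat_def by simp
    show ?thesis by (rule det_lower_triangular[OF _ c]) (auto simp: Nm_def)
  qed
  also have "diag_mat (Nm k a d e) = [e] @ replicate k d @ replicate k a"
    by (rule nth_equalityI) (auto simp: diag_nth Nm_def nth_append nth_Cons')
  finally show ?thesis by simp
qed

lemma det_Mx: assumes a: "a = x - 1" "a \<noteq> 0" and d: "d = x - 2 - 1/a" "d \<noteq> 0"
  shows "det (Mx k x) = (x - real k - real k / d) * d^k * a^k"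
proof -
  let ?e = "x - real k - real k / d"
  have c1: "Um k a d \<in> carrier_mat (k+k+1) (k+k+1)" unfolding carrier_mat_def by simp
  have c2: "Nm k a d ?e \<in> carrier_mat (k+k+1) (k+k+1)" unfolding carrier_mat_def by simp
  have "det (Mx k x) = det (Um k a d * Nm k a d ?e)" by (simp only: factor[OF a d refl])
  also have "\<dots> = det (Um k a d) * det (Nm k a d ?e)" by (rule det_mult[OF c1 c2])
  also have "\<dots> = ?e * d^k * a^k" by (simp only: detU detN mult_1_left)
  finally show ?thesis .
qed

definition Ptarget :: "nat \<Rightarrow> real poly" where
  "Ptarget k = [:0,1:] * [:1,-3,1:]^(k-1) * [:2 * real k + 1, - (real k + 3), 1:]"

lemma poly_char_eq: assumes k: "k \<ge> 1" and x: "x \<noteq> 1" "x^2 - 3*x + 1 \<noteq> 0"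
  shows "poly (char_poly (laplacian (spider_vertices k k) (spider_adj k k))) x = poly (Ptarget k) x"
proof -
  define a where "a = x - 1"
  define d where "d = x - 2 - 1/a"
  have a0: "a \<noteq> 0" using x by (simp add: a_def)
  have da: "d * a = x^2 - 3*x + 1" using a0 by (simp add: d_def a_def field_simps power2_eq_square)
  have d0: "d \<noteq> 0" using da x by auto
  obtain m where m: "k = Suc m" using k by (cases k) auto
  have "poly (char_poly (laplacian (spider_vertices k k) (spider_adj k k))) x = (x - real k - real k / d) * d^k * a^k"
    unfolding poly_char by (rule det_Mx[OF a_def a0 d_def d0])
  also have "\<dots> = ((x - real k) * (d * a) - real k * a) * (d*a)^m"
  proof -
    have dk: "d^k = d * d^m" "a^k = a * a^m" using m by simp_all
    have e: "(x - real k - real k / d) * d = (x - real k) * d - real k" using d0 by (simp add: field_simps)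
    have "(x - real k - real k / d) * d^k * a^k = ((x - real k - real k / d) * d) * a * (d^m * a^m)"
      unfolding dk by (simp only: mult_ac)
    also have "\<dots> = ((x - real k) * (d * a) - real k * a) * (d*a)^m"
      unfolding e power_mult_distrib by (simp add: algebra_simps)
    finally show ?thesis .
  qed
  also have "\<dots> = poly (Ptarget k) x"
  proof -
    have p1: "poly [:1,-3,1:] x = x^2 - 3*x + 1" by (simp add: algebra_simps power2_eq_square)
    have p2: "poly [:2 * real k + 1, - (real k + 3), 1:] x = x^2 - (real k + 3) * x + (2 * real k + 1)"
      by (simp add: algebra_simps power2_eq_square)
    have "poly (Ptarget k) x = x * (x^2 - 3*x + 1)^m * (x^2 - (real k + 3) * x + (2 * real k + 1))"
      unfolding Ptarget_def poly_mult poly_power p1 p2 using m by simp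
    also have "\<dots> = ((x - real k) * (d * a) - real k * a) * (d*a)^m"
      unfolding da by (simp add: a_def algebra_simps power2_eq_square)
    finally show ?thesis by simp
  qed
  finally show ?thesis .
qed


lemma char_eq: assumes k: "k \<ge> 1"
  shows "char_poly (laplacian (spider_vertices k k) (spider_adj k k)) = Ptarget k"
proof (rule ccontr)
  let ?q = "char_poly (laplacian (spider_vertices k k) (spider_adj k k)) - Ptarget k"
  let ?r = "[:1,-3,1:] :: real poly"
  assume "char_poly (laplacian (spider_vertices k k) (spider_adj k k)) \<noteq> Ptarget k"
  hence q0: "?q \<noteq> 0" by simp
  have r0: "?r \<noteq> 0" by simp
  have "UNIV \<subseteq> {x. poly ?q x = 0} \<union> {1} \<union> {x. poly ?r x = 0}"
  proof
    fix x :: real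
    assume "x \<in> UNIV"
    show "x \<in> {x. poly ?q x = 0} \<union> {1} \<union> {x. poly ?r x = 0}"
    proof (cases "x = 1 \<or> x^2 - 3*x + 1 = 0")
      case True
      thus ?thesis by (auto simp: algebra_simps power2_eq_square)
    next
      case False
      thus ?thesis using poly_char_eq[OF k, of x] by auto
    qed
  qed
  moreover have "finite ({x. poly ?q x = 0} \<union> {1} \<union> {x. poly ?r x = 0})"
    using poly_roots_finite[OF q0] poly_roots_finite[OF r0] by simp
  ultimately have "finite (UNIV :: real set)" by (rule finite_subset)
  thus False using infinite_UNIV_char_0 by blast
qed

lemma repeat_two: "repeat_mset m {#a, b#} = replicate_mset m a + replicate_mset m b"
  by (induct m) auto

theorem proposition3p1:
  fixes k :: nat and l1 l2 :: real
  assumes "k \<ge> 1"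
    and "\<forall>x::real. x^2 - (real k + 3) * x + (2 * real k + 1) = (x - l1) * (x - l2)"
  shows "laplacian_spectrum (spider_vertices k k) (spider_adj k k) =
           {#0#} + replicate_mset (k - 1) ((3 - sqrt 5) / 2) + {#l1#}
           + replicate_mset (k - 1) ((3 + sqrt 5) / 2) + {#l2#}"
proof -
  let ?t = "(3 - sqrt 5) / 2" and ?tb = "(3 + sqrt 5) / 2"
  have s5: "sqrt 5 * sqrt 5 = (5::real)" by simp
  have r: "[:1,-3,1:] = [:-?t,1:] * [:-?tb,1:]"
  proof -
    have "poly [:1,-3,1:] = poly ([:-?t,1:] * [:-?tb,1:])"
    proof
      fix x :: real
      show "poly [:1,-3,1:] x = poly ([:-?t,1:] * [:-?tb,1:]) x"
        using s5 by (simp add: algebra_simps power2_eq_square field_simps)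
    qed
    thus ?thesis by (simp add: poly_eq_poly_eq_iff)
  qed
  have qd: "[:2 * real k + 1, - (real k + 3), 1:] = [:-l1,1:] * [:-l2,1:]"
  proof -
    have "poly [:2 * real k + 1, - (real k + 3), 1:] = poly ([:-l1,1:] * [:-l2,1:])"
    proof
      fix x :: real
      show "poly [:2 * real k + 1, - (real k + 3), 1:] x = poly ([:-l1,1:] * [:-l2,1:]) x"
        using assms(2)[rule_format, of x] by (simp add: algebra_simps power2_eq_square)
    qed
    thus ?thesis by (simp add: poly_eq_poly_eq_iff)
  qed
  have pr: "proots ([:1,-3,1:] :: real poly) = {#?t, ?tb#}"
    unfolding r by (subst proots_mult) auto
  have pq: "proots [:2 * real k + 1, - (real k + 3), 1:] = {#l1, l2#}"
    unfolding qd by (subst proots_mult) auto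
  have nz1: "[:1,-3,1:] ^ (k-1) \<noteq> (0 :: real poly)" by simp
  have nz2: "[:0,1:] * [:1,-3,1:] ^ (k-1) \<noteq> (0 :: real poly)" by simp
  have nz3: "[:2 * real k + 1, - (real k + 3), 1:] \<noteq> 0" by simp
  have "laplacian_spectrum (spider_vertices k k) (spider_adj k k) = proots (Ptarget k)"
    unfolding laplacian_spectrum_def char_eq[OF assms(1)] ..
  also have "\<dots> = {#0#} + (replicate_mset (k-1) ?t + replicate_mset (k-1) ?tb) + {#l1, l2#}"
  proof -
    have a1: "proots ([:0,1:]::real poly) = {#0#}" using proots_linear_factor[of "0::real"] by simp
    have "proots (Ptarget k) = proots ([:0,1:] * [:1,-3,1:]^(k-1)) + proots [:2 * real k + 1, - (real k + 3), 1:]"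
      unfolding Ptarget_def by (rule proots_mult[OF nz2 nz3])
    also have "proots ([:0,1:] * [:1,-3,1:]^(k-1)) = proots ([:0,1:]::real poly) + proots ([:1,-3,1:]^(k-1) :: real poly)"
      by (rule proots_mult) simp_all
    finally show ?thesis by (simp only: a1 proots_power pr pq repeat_two)
  qed
  also have "\<dots> = {#0#} + replicate_mset (k - 1) ?t + {#l1#} + replicate_mset (k - 1) ?tb + {#l2#}"
    by (simp add: add_ac)
  finally show ?thesis .
qed

end
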